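(* Let $A$ be a pca and $f:A\rightharpoonup A$ a partial function. Then the identity function $F=\mathrm{id}:A\to A[f]$ is computationally dense, and it satisfies condition (in): there are $m,c\in A$ such that $m$ witnesses computational density of $F$ and for every $b\in A$, $c\cdot^f b$ is defined and $m\cdot^f(c\cdot^f b)=b$.
   Context: A pca is a set $A$ with a partial binary application admitting $K,S$ with $Kab=a$, $Sab{\downarrow}$, $Sabc\simeq ac(bc)$. Each pca has fixed Booleans $\top,\bot$, pairing $p$ with projections $p_0,p_1$ ($p_0(pab)=a$, $p_1(pab)=b$), and a coding $[u_0,\dots,u_{n-1}]$ of finite sequences with concatenation $\ast$. For partial $f:A\rightharpoonup A$, the pca $A[f]$ has underlying set $A$ and application $\cdot^f$: an $f$-dialogue between $a,b$ is a code $u=[u_0,\dots,u_{n-1}]$ such that for each $i<n$ there is $v_i$ with $a\cdot([b]\ast[u_0,\dots,u_{i-1}])=p\bot v_i$ and $f(v_i)$ defined and equal to $u_i$; and $a\cdot^f b=c$ iff there is an $f$-dialogue $u$ between $a,b$ with $a\cdot([b]\ast u)=p\top c$. The map $a\mapsto\{a\}$ is an applicative morphism $A\to A[f]$. For pcas $A,B$ and a function $F:A\to B$ such that $a\mapsto\{F(a)\}$ is an applicative morphism, $F$ is computationally dense if there is $m\in B$ such that for every $b\in B$ there is $a\in A$ such that for all $a'\in A$: if $bF(a'){\downarrow}$ in $B$, then $aa'{\downarrow}$ in $A$ and $mF(aa')=bF(a')$ in $B$. Condition (in) (for such $F$ and $m$): there is $c\in B$ such that for every $b\in B$ there is $a\in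 A$ with $cb=F(a)$ and $m(cb)=b$. *)

theory Defs
  imports Main
begin

text \<open>A pca is given by a partial application on a type 'a together with a
  chosen pair of combinators K, S.  Kleene equality is equality of options.\<close>

definition is_pca :: "('a \<Rightarrow> 'a \<Rightarrow> 'a option) \<Rightarrow> 'a \<Rightarrow> 'a \<Rightarrow> bool" where
  "is_pca app k s \<longleftrightarrow>
     (\<forall>a b. \<exists>ka. app k a = Some ka \<and> app ka b = Some a) \<and>
     (\<forall>a b. \<exists>sa sab. app s a = Some sa \<and> app sa b = Some sab) \<and>
     (\<forall>a b c sa sab. app s a = Some sa \<longrightarrow> app sa b = Some sab \<longrightarrow>
        app sab c = (case app a c of None \<Rightarrow> None
                      | Some x \<Rightarrow> (case app b c of None \<Rightarrow> None
                                    | Some y \<Rightarrow> app x y)))"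

definition ap :: "('a \<Rightarrow> 'a \<Rightarrow> 'a option) \<Rightarrow> 'a option \<Rightarrow> 'a option \<Rightarrow> 'a option" where
  "ap app x y = (case x of None \<Rightarrow> None
                 | Some a \<Rightarrow> (case y of None \<Rightarrow> None | Some b \<Rightarrow> app a b))"

datatype 'a cterm = Var nat | Const 'a | App "'a cterm" "'a cterm"

fun ev :: "('a \<Rightarrow> 'a \<Rightarrow> 'a option) \<Rightarrow> 'a cterm \<Rightarrow> 'a option" where
  "ev app (Var n) = None"
| "ev app (Const a) = Some a"
| "ev app (App t u) = ap app (ev app t) (ev app u)"

fun lam :: "'a \<Rightarrow> 'a \<Rightarrow> nat \<Rightarrow> 'a cterm \<Rightarrow> 'a cterm" where
  "lam k s x (Var y) = (if x = y then App (App (Const s) (Const k)) (Const k)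
                        else App (Const k) (Var y))"
| "lam k s x (Const a) = App (Const k) (Const a)"
| "lam k s x (App t u) = App (App (Const s) (lam k s x t)) (lam k s x u)"

definition combI :: "('a \<Rightarrow> 'a \<Rightarrow> 'a option) \<Rightarrow> 'a \<Rightarrow> 'a \<Rightarrow> 'a" where
  "combI app k s = the (ev app (App (App (Const s) (Const k)) (Const k)))"

definition ptop :: "('a \<Rightarrow> 'a \<Rightarrow> 'a option) \<Rightarrow> 'a \<Rightarrow> 'a \<Rightarrow> 'a" where
  "ptop app k s = k"

definition pbot :: "('a \<Rightarrow> 'a \<Rightarrow> 'a option) \<Rightarrow> 'a \<Rightarrow> 'a \<Rightarrow> 'a" where
  "pbot app k s = the (app k (combI app k s))"

text \<open>Pairing p = \<lambda>x y z. z x y (projections p0 = \<lambda>x. x top, p1 = \<lambda>x. x bot).\<close>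
definition ppair :: "('a \<Rightarrow> 'a \<Rightarrow> 'a option) \<Rightarrow> 'a \<Rightarrow> 'a \<Rightarrow> 'a" where
  "ppair app k s = the (ev app (lam k s 0 (lam k s 1 (lam k s 2
                      (App (App (Var 2) (Var 0)) (Var 1))))))"

definition pr :: "('a \<Rightarrow> 'a \<Rightarrow> 'a option) \<Rightarrow> 'a \<Rightarrow> 'a \<Rightarrow> 'a \<Rightarrow> 'a \<Rightarrow> 'a" where
  "pr app k s a b = the (ap app (app (ppair app k s) a) (Some b))"

text \<open>Coding of finite sequences: [] = p top top, [x] * u = p bot (p x u).
  Hence [b] * [u0,...,u(i-1)] is  code (b # take i us).\<close>
fun code :: "('a \<Rightarrow> 'a \<Rightarrow> 'a option) \<Rightarrow> 'a \<Rightarrow> 'a \<Rightarrow> 'a list \<Rightarrow> 'a" where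
  "code app k s [] = pr app k s (ptop app k s) (ptop app k s)"
| "code app k s (x # xs) = pr app k s (pbot app k s) (pr app k s x (code app k s xs))"

definition is_dialogue ::
  "('a \<Rightarrow> 'a \<Rightarrow> 'a option) \<Rightarrow> 'a \<Rightarrow> 'a \<Rightarrow> ('a \<Rightarrow> 'a option) \<Rightarrow> 'a \<Rightarrow> 'a \<Rightarrow> 'a list \<Rightarrow> bool" where
  "is_dialogue app k s f a b us \<longleftrightarrow>
     (\<forall>i < length us. \<exists>v. app a (code app k s (b # take i us)) = Some (pr app k s (pbot app k s) v)
                          \<and> f v = Some (us ! i))"

text \<open>appf app k s f a b c  means  a \<cdot>^f b = c.\<close>
definition appf ::
  "('a \<Rightarrow> 'a \<Rightarrow> 'a option) \<Rightarrow> 'a \<Rightarrow> 'a \<Rightarrow> ('a \<Rightarrow> 'a option) \<Rightarrow> 'a \<Rightarrow> 'a \<Rightarrow> 'a \<Rightarrow> bool" where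
  "appf app k s f a b c \<longleftrightarrow>
     (\<exists>us. is_dialogue app k s f a b us \<and>
           app a (code app k s (b # us)) = Some (pr app k s (ptop app k s) c))"

text \<open>Application in A is a partial function; application in B is given as a
  relation appB b b' d meaning b b' = d.\<close>

definition sing_appl_morph ::
  "('a \<Rightarrow> 'a \<Rightarrow> 'a option) \<Rightarrow> ('b \<Rightarrow> 'b \<Rightarrow> 'b \<Rightarrow> bool) \<Rightarrow> ('a \<Rightarrow> 'b) \<Rightarrow> bool" where
  "sing_appl_morph appA appB F \<longleftrightarrow>
     (\<exists>r. \<forall>a a' e. appA a a' = Some e \<longrightarrow>
            (\<exists>d. appB r (F a) d \<and> appB d (F a') (F e)))"

definition comp_dense_wit ::
  "('a \<Rightarrow> 'a \<Rightarrow> 'a option) \<Rightarrow> ('b \<Rightarrow> 'b \<Rightarrow> 'b \<Rightarrow> bool) \<Rightarrow> ('a \<Rightarrow> 'b) \<Rightarrow> 'b \<Rightarrow> bool" where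
  "comp_dense_wit appA appB F m \<longleftrightarrow>
     (\<forall>b. \<exists>a. \<forall>a'. (\<exists>d. appB b (F a') d) \<longrightarrow>
        (\<exists>e. appA a a' = Some e \<and> (\<forall>d. appB b (F a') d \<longrightarrow> appB m (F e) d)))"

definition comp_dense ::
  "('a \<Rightarrow> 'a \<Rightarrow> 'a option) \<Rightarrow> ('b \<Rightarrow> 'b \<Rightarrow> 'b \<Rightarrow> bool) \<Rightarrow> ('a \<Rightarrow> 'b) \<Rightarrow> bool" where
  "comp_dense appA appB F \<longleftrightarrow>
     sing_appl_morph appA appB F \<and> (\<exists>m. comp_dense_wit appA appB F m)"

definition cond_in ::
  "('b \<Rightarrow> 'b \<Rightarrow> 'b \<Rightarrow> bool) \<Rightarrow> ('a \<Rightarrow> 'b) \<Rightarrow> 'b \<Rightarrow> bool" where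
  "cond_in appB F m \<longleftrightarrow> (\<exists>c. \<forall>b. \<exists>a. appB c b (F a) \<and> appB m (F a) b)"

end

theory Submission
  imports Defs
begin

fun substc :: "(nat \<Rightarrow> 'a) \<Rightarrow> 'a cterm \<Rightarrow> 'a cterm" where
  "substc \<sigma> (Var n) = Const (\<sigma> n)"
| "substc \<sigma> (Const a) = Const a"
| "substc \<sigma> (App t u) = App (substc \<sigma> t) (substc \<sigma> u)"

fun fv :: "'a cterm \<Rightarrow> nat set" where
  "fv (Var n) = {n}"
| "fv (Const a) = {}"
| "fv (App t u) = fv t \<union> fv u"

lemma fv_lam: "fv (lam k s x t) = fv t - {x}"
  by (induction t) auto

lemma substc_closed: "fv t = {} \<Longrightarrow> substc \<sigma> t = t"
  by (induction t) auto

lemma ap_simps[simp]: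
  "ap app (Some a) (Some b) = app a b"
  "ap app None y = None"
  "ap app x None = None"
  by (auto simp: ap_def split: option.splits)

locale pcaL =
  fixes app :: "'a \<Rightarrow> 'a \<Rightarrow> 'a option" and k s :: 'a
  assumes pca: "is_pca app k s"
begin

lemma K_ex: "\<exists>ka. app k a = Some ka"
  using pca unfolding is_pca_def by blast

lemma K_app: "app k a = Some ka \<Longrightarrow> app ka b = Some a"
  using pca unfolding is_pca_def by (metis option.inject)

lemma S_ex: "\<exists>sa sab. app s a = Some sa \<and> app sa b = Some sab"
  using pca unfolding is_pca_def by blast

lemma S_app: "app s a = Some sa \<Longrightarrow> app sa b = Some sab \<Longrightarrow>
   app sab c = ap app (app a c) (app b c)"
  using pca unfolding is_pca_def ap_def by blast

lemma master:
  "\<exists>w. ev app (substc \<sigma> (lam k s x t)) = Some w \<and>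
        (\<forall>a. app w a = ev app (substc (\<sigma>(x:=a)) t))"
proof (induction t arbitrary: \<sigma>)
  case (Var y)
  show ?case
  proof (cases "x = y")
    case True
    obtain sk skk where 1: "app s k = Some sk" "app sk k = Some skk" using S_ex by blast
    have "app skk a = Some a" for a
    proof -
      obtain ka where 2: "app k a = Some ka" using K_ex by blast
      have "app skk a = ap app (app k a) (app k a)" by (rule S_app[OF 1])
      also have "\<dots> = Some a" using 2 K_app[OF 2] by simp
      finally show ?thesis .
    qed
    moreover have "ev app (substc \<sigma> (lam k s x (Var y))) = Some skk" using True 1 by simp
    ultimately show ?thesis using True by simp
  next
    case False
    obtain ka where 1: "app k (\<sigma> y) = Some ka" using K_ex by blast
    have "ev app (substc \<sigma> (lam k s x (Var y))) = Some ka" using False 1 by simp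
    moreover have "app ka a = ev app (substc (\<sigma>(x:=a)) (Var y))" for a
      using False K_app[OF 1] by simp
    ultimately show ?thesis by blast
  qed
next
  case (Const c)
  obtain ka where 1: "app k c = Some ka" using K_ex by blast
  have "ev app (substc \<sigma> (lam k s x (Const c))) = Some ka" using 1 by simp
  moreover have "app ka a = ev app (substc (\<sigma>(x:=a)) (Const c))" for a
    using K_app[OF 1] by simp
  ultimately show ?case by blast
next
  case (App t u)
  obtain wt where t: "ev app (substc \<sigma> (lam k s x t)) = Some wt"
    "\<forall>a. app wt a = ev app (substc (\<sigma>(x:=a)) t)" using App.IH(1) by blast
  obtain wu where u: "ev app (substc \<sigma> (lam k s x u)) = Some wu"
    "\<forall>a. app wu a = ev app (substc (\<sigma>(x:=a)) u)" using App.IH(2) by blast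
  obtain sa sab where 1: "app s wt = Some sa" "app sa wu = Some sab" using S_ex by blast
  have "ev app (substc \<sigma> (lam k s x (App t u))) = Some sab" using t u 1 by simp
  moreover have "app sab a = ev app (substc (\<sigma>(x:=a)) (App t u))" for a
    using S_app[OF 1, of a] t(2) u(2) by simp
  ultimately show ?case by blast
qed

lemma master_closed:
  assumes "fv t \<subseteq> {x}"
  shows "\<exists>w. ev app (lam k s x t) = Some w \<and>
        (\<forall>a. app w a = ev app (substc ((\<lambda>_. k)(x:=a)) t))"
proof -
  have "fv (lam k s x t) = {}" using assms by (auto simp: fv_lam)
  then have "substc (\<lambda>_. k) (lam k s x t) = lam k s x t" by (rule substc_closed)
  then show ?thesis using master[of "\<lambda>_. k" x t] by simp
qed

abbreviation P where "P \<equiv> ppair app k s"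
abbreviation bot where "bot \<equiv> pbot app k s"

lemma I_app: "app (combI app k s) a = Some a"
proof -
  obtain sk skk where 1: "app s k = Some sk" "app sk k = Some skk" using S_ex by blast
  obtain ka where 2: "app k a = Some ka" using K_ex by blast
  have "combI app k s = skk" using 1 by (simp add: combI_def)
  then show ?thesis using S_app[OF 1, of a] K_app[OF 2] 2 by simp
qed

lemma P_full: "\<exists>pb. app P b = Some pb \<and> (\<forall>c. \<exists>pbc. app pb c = Some pbc \<and>
     (\<forall>z. app pbc z = ap app (app z b) (Some c)))"
proof -
  define T :: "'a cterm" where "T = App (App (Var 2) (Var 0)) (Var 1)"
  have fv: "fv (lam k s 1 (lam k s 2 T)) \<subseteq> {0}" by (auto simp add: fv_lam T_def)
  obtain w where w: "ev app (lam k s 0 (lam k s 1 (lam k s 2 T))) = Some w"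
    "\<forall>a. app w a = ev app (substc ((\<lambda>_. k)(0:=a)) (lam k s 1 (lam k s 2 T)))"
    using master_closed[OF fv] by blast
  have Pw: "P = w" using w(1) by (simp add: ppair_def T_def)
  obtain w1 where w1: "ev app (substc ((\<lambda>_. k)(0:=b)) (lam k s 1 (lam k s 2 T))) = Some w1"
    "\<forall>c. app w1 c = ev app (substc ((\<lambda>_. k)(0:=b,1:=c)) (lam k s 2 T))"
    using master by blast
  have "\<exists>pbc. app w1 c = Some pbc \<and> (\<forall>z. app pbc z = ap app (app z b) (Some c))" for c
  proof -
    obtain w2 where w2: "ev app (substc ((\<lambda>_. k)(0:=b,1:=c)) (lam k s 2 T)) = Some w2"
      "\<forall>z. app w2 z = ev app (substc ((\<lambda>_. k)(0:=b,1:=c,2:=z)) T)"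
      using master by blast
    show ?thesis using w1 w2 by (simp add: T_def)
  qed
  then show ?thesis using Pw w w1 by auto
qed

lemma pr_app: "app (pr app k s b c) z = ap app (app z b) (Some c)"
proof -
  obtain pb where 1: "app P b = Some pb" "\<forall>c. \<exists>pbc. app pb c = Some pbc \<and>
     (\<forall>z. app pbc z = ap app (app z b) (Some c))" using P_full by blast
  then obtain pbc where "app pb c = Some pbc" "\<forall>z. app pbc z = ap app (app z b) (Some c)" by blast
  then show ?thesis using 1 by (simp add: pr_def)
qed

lemma P_ex: "\<exists>pb. app P b = Some pb \<and> (\<forall>c. app pb c = Some (pr app k s b c))"
proof -
  obtain pb where 1: "app P b = Some pb" "\<forall>c. \<exists>pbc. app pb c = Some pbc \<and>
     (\<forall>z. app pbc z = ap app (app z b) (Some c))" using P_full by blast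
  have "app pb c = Some (pr app k s b c)" for c
  proof -
    obtain pbc where "app pb c = Some pbc" using 1(2) by blast
    then show ?thesis using 1(1) by (simp add: pr_def)
  qed
  then show ?thesis using 1(1) by blast
qed

lemma ap_P[simp]: "ap app (app P b) (Some c) = Some (pr app k s b c)"
  using P_ex[of b] by auto

lemma pr_fst[simp]: "app (pr app k s b c) k = Some b"
proof -
  obtain ka where 1: "app k b = Some ka" using K_ex by blast
  then show ?thesis using K_app[OF 1] by (simp add: pr_app)
qed

lemma pr_snd[simp]: "app (pr app k s b c) bot = Some c"
proof -
  obtain ki where 1: "app k (combI app k s) = Some ki" using K_ex by blast
  then have "bot = ki" by (simp add: pbot_def)
  then show ?thesis using K_app[OF 1, of b] I_app by (simp add: pr_app)
qed

abbreviation PairT where "PairT t u \<equiv> App (App (Const P) t) u"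
abbreviation Fst where "Fst t \<equiv> App t (Const k)"
abbreviation Snd where "Snd t \<equiv> App t (Const bot)"

lemma appf_nil:
  assumes "app a (code app k s [b]) = Some (pr app k s k c)"
  shows "appf app k s f a b c"
  unfolding appf_def is_dialogue_def using assms by (intro exI[of _ "[]"]) (simp add: ptop_def)

definition mb :: "'a cterm" where
  "mb = App (Fst (Fst (Snd (Var 0)))) (PairT (Const bot) (PairT (Snd (Fst (Snd (Var 0)))) (Snd (Snd (Var 0)))))"

definition mm where "mm = the (ev app (substc (\<lambda>_. k) (lam k s 0 mb)))"

lemma mm_app: "app mm (pr app k s bot (pr app k s (pr app k s x y) cu)) = app x (pr app k s bot (pr app k s y cu))"
proof -
  obtain w where w: "ev app (substc (\<lambda>_. k) (lam k s 0 mb)) = Some w"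
    "\<forall>a. app w a = ev app (substc ((\<lambda>_. k)(0:=a)) mb)" using master by blast
  have "mm = w" using w(1) by (simp add: mm_def)
  then show ?thesis using w(2) by (simp add: mb_def)
qed

lemma mm_code: "app mm (code app k s (pr app k s x y # us)) = app x (code app k s (y # us))"
  using mm_app by simp

lemma mm_dialogue: "is_dialogue app k s f mm (pr app k s x y) us = is_dialogue app k s f x y us"
  unfolding is_dialogue_def by (simp only: mm_code)

lemma mm_appf: "appf app k s f mm (pr app k s x y) d = appf app k s f x y d"
  unfolding appf_def by (simp only: mm_code mm_dialogue)

lemma mm_wit: "comp_dense_wit app (appf app k s f) id mm"
  unfolding comp_dense_wit_def
proof
  fix b
  obtain pb where pb: "app P b = Some pb" "\<forall>c. app pb c = Some (pr app k s b c)" using P_ex by blast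
  show "\<exists>a. \<forall>a'. (\<exists>d. appf app k s f b (id a') d) \<longrightarrow>
             (\<exists>e. app a a' = Some e \<and> (\<forall>d. appf app k s f b (id a') d \<longrightarrow> appf app k s f mm (id e) d))"
    using pb(2) mm_appf by (intro exI[of _ pb]) auto
qed

definition rb :: "'a cterm" where
  "rb = PairT (Const k) (lam k s 1 (PairT (Const k) (App (Fst (Snd (Var 0))) (Fst (Snd (Var 1))))))"

definition rr where "rr = the (ev app (substc (\<lambda>_. k) (lam k s 0 rb)))"

lemma morph: "sing_appl_morph app (appf app k s f) id"
  unfolding sing_appl_morph_def
proof (rule exI[of _ rr], intro allI impI)
  fix a a' e
  assume e: "app a a' = Some e"
  obtain w where w: "ev app (substc (\<lambda>_. k) (lam k s 0 rb)) = Some w"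
    "\<forall>a. app w a = ev app (substc ((\<lambda>_. k)(0:=a)) rb)" using master by blast
  have rw: "rr = w" using w(1) by (simp add: rr_def)
  define u where "u = code app k s [a]"
  obtain d where d: "ev app (substc ((\<lambda>_. k)(0:=u)) (lam k s 1 (PairT (Const k) (App (Fst (Snd (Var 0))) (Fst (Snd (Var 1)))))))
     = Some d"
    "\<forall>v. app d v = ev app (substc ((\<lambda>_. k)(0:=u, 1:=v)) (PairT (Const k) (App (Fst (Snd (Var 0))) (Fst (Snd (Var 1))))))"
    using master by blast
  have "app rr (code app k s [a]) = Some (pr app k s k d)"
    using rw w(2) d(1) by (simp add: rb_def u_def)
  then have 1: "appf app k s f rr (id a) d" by (simp add: appf_nil)
  have "app d (code app k s [a']) = Some (pr app k s k e)"
    using d(2) e by (simp add: u_def)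
  then have 2: "appf app k s f d (id a') (id e)" by (simp add: appf_nil)
  from 1 2 show "\<exists>d. appf app k s f rr (id a) d \<and> appf app k s f d (id a') (id e)" by blast
qed

definition qb :: "'a cterm" where
  "qb = PairT (Const k) (Fst (Snd (Var 0)))"

definition qq where "qq = the (ev app (substc (\<lambda>_. k) (lam k s 0 qb)))"

lemma qq_appf: "appf app k s f qq b b"
proof -
  obtain w where w: "ev app (substc (\<lambda>_. k) (lam k s 0 qb)) = Some w"
    "\<forall>a. app w a = ev app (substc ((\<lambda>_. k)(0:=a)) qb)" using master by blast
  have "qq = w" using w(1) by (simp add: qq_def)
  then have "app qq (code app k s [b]) = Some (pr app k s k b)" using w(2) by (simp add: qb_def)
  then show ?thesis by (rule appf_nil)
qed

definition cb :: "'a cterm" where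
  "cb = PairT (Const k) (PairT (Const qq) (Fst (Snd (Var 0))))"

definition cc where "cc = the (ev app (substc (\<lambda>_. k) (lam k s 0 cb)))"

lemma cc_appf: "appf app k s f cc b (pr app k s qq b)"
proof -
  obtain w where w: "ev app (substc (\<lambda>_. k) (lam k s 0 cb)) = Some w"
    "\<forall>a. app w a = ev app (substc ((\<lambda>_. k)(0:=a)) cb)" using master by blast
  have "cc = w" using w(1) by (simp add: cc_def)
  then have "app cc (code app k s [b]) = Some (pr app k s k (pr app k s qq b))" using w(2) by (simp add: cb_def)
  then show ?thesis by (rule appf_nil)
qed

lemma cond: "cond_in (appf app k s f) id mm"
  unfolding cond_in_def
proof (rule exI[of _ cc], intro allI)
  fix b
  show "\<exists>a. appf app k s f cc b (id a) \<and> appf app k s f mm (id a) b"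
    using cc_appf[where b=b] mm_appf qq_appf by (intro exI[of _ "pr app k s qq b"]) simp
qed

lemma main: "comp_dense app (appf app k s f) id \<and>
         (\<exists>m. comp_dense_wit app (appf app k s f) id m \<and> cond_in (appf app k s f) id m)"
  using morph mm_wit cond unfolding comp_dense_def by blast

end

theorem mainTheorem9:
  fixes app :: "'a \<Rightarrow> 'a \<Rightarrow> 'a option" and k s :: 'a and f :: "'a \<Rightarrow> 'a option"
  assumes "is_pca app k s"
  shows "comp_dense app (appf app k s f) id \<and>
         (\<exists>m. comp_dense_wit app (appf app k s f) id m \<and> cond_in (appf app k s f) id m)"
  using pcaL.main[OF pcaL.intro[OF assms]] .

end
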